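(* Let $f:\mathbb{R}^{m\times n}\to\mathbb{R}$ be $L$-smooth, i.e. $f({\bm X})\le f({\bm Y})+\langle\nabla f({\bm Y}),{\bm X}-{\bm Y}\rangle+\frac L2\|{\bm X}-{\bm Y}\|_F^2$ for all ${\bm X},{\bm Y}$, and let $f_*:=\inf_{{\bm X}} f({\bm X})>-\infty$. Fix $\tau>0$, $K\ge 1$, an initial point ${\bm X}_0$, and consider the iteration ${\bm X}_{k+1}={\bm X}_k-\eta\,\mathcal{C}_\tau({\bm G}_k)$ with constant step size $\eta=\frac{1}{4L\sqrt K}$, where the random matrices ${\bm G}_k$ satisfy $\mathbb{E}[{\bm G}_k\mid{\bm X}_k]=\nabla f({\bm X}_k)$ and $\mathbb{E}[\|{\bm G}_k-\nabla f({\bm X}_k)\|_F^\alpha\mid{\bm X}_k]\le\sigma^\alpha$ for some $\alpha\in(1,2]$ and $\sigma>0$. Then $$\min_{0\le k\le K-1}\mathbb{E}\big[\|\nabla f({\bm X}_k)\|_F^2\big]\le\frac{16L(f({\bm X}_0)-f_* )}{\sqrt K}+\frac{C_{\alpha,d}\,\tau^{2-\alpha}\sigma^\alpha}{8\sqrt K}+\frac2K\sum_{k=0}^{K-1}\Delta_k,$$ where $\Delta_k:=\mathbb{E}\big[\|\nabla f({\bm X}_k)-\mathbb{E}[\mathcal{C}_\tau({\bm G}_k)\mid{\bm X}_k]\|_F^2\big]$, $C_{\alpha,d}:=2^{4-\alpha}d^{1-\alpha/2}$ and $d=\min\{m,n\}$.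
   Context: $\|\cdot\|_F$ is the Frobenius norm and $\langle\cdot,\cdot\rangle$ the Frobenius inner product. Spectral clipping: for ${\bm G}\in\mathbb{R}^{m\times n}$ with (thin) SVD ${\bm G}={\bm U}\,\mathrm{diag}(\sigma_1,\dots,\sigma_d){\bm V}^\top$, $d=\min\{m,n\}$, and threshold $\tau>0$, define $\mathcal{C}_\tau({\bm G}):={\bm U}\,\mathrm{diag}(\min\{\sigma_1,\tau\},\dots,\min\{\sigma_d,\tau\}){\bm V}^\top$ (singular values exceeding $\tau$ are replaced by $\tau$, singular vectors unchanged). *)

theory Defs
  imports "HOL-Analysis.Analysis" "HOL-Probability.Probability"
begin

text \<open>Matrices in R^{m x n} are modelled as real^'n^'m (rows indexed by 'm).
 The norm on this type is the Frobenius norm and the inner product is the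
 Frobenius inner product.\<close>

definition svd_rank :: "('n::finite) itself \<Rightarrow> ('m::finite) itself \<Rightarrow> nat" where
  "svd_rank _ _ = min CARD('m) CARD('n)"

definition outer_prod :: "real^'m \<Rightarrow> real^'n \<Rightarrow> real^'n^'m" where
  "outer_prod u v = (\<chi> i j. u $ i * v $ j)"

definition is_thin_svd :: "real^'n^'m \<Rightarrow> (nat \<Rightarrow> real^'m) \<Rightarrow> (nat \<Rightarrow> real^'n) \<Rightarrow> (nat \<Rightarrow> real) \<Rightarrow> bool" where
  "is_thin_svd G u v s \<longleftrightarrow>
     (let d = svd_rank TYPE('n) TYPE('m) in
       (\<forall>i<d. \<forall>j<d. u i \<bullet> u j = (if i = j then 1 else 0)) \<and>
       (\<forall>i<d. \<forall>j<d. v i \<bullet> v j = (if i = j then 1 else 0)) \<and>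
       (\<forall>i<d. 0 \<le> s i) \<and>
       G = (\<Sum>i<d. s i *\<^sub>R outer_prod (u i) (v i)))"

definition spec_clip :: "real \<Rightarrow> real^'n^'m \<Rightarrow> real^'n^'m" where
  "spec_clip \<tau> G = (SOME C. \<exists>u v s. is_thin_svd G u v s \<and>
      C = (\<Sum>i<svd_rank TYPE('n) TYPE('m). min (s i) \<tau> *\<^sub>R outer_prod (u i) (v i)))"

definition gen_alg :: "'a measure \<Rightarrow> ('a \<Rightarrow> real^'n^'m) \<Rightarrow> 'a measure" where
  "gen_alg M Y = vimage_algebra (space M) Y borel"

definition mat_cond_exp :: "'a measure \<Rightarrow> 'a measure \<Rightarrow> ('a \<Rightarrow> real^'n^'m) \<Rightarrow> 'a \<Rightarrow> real^'n^'m" where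
  "mat_cond_exp M F H = (\<lambda>\<omega>. \<chi> i j. real_cond_exp M F (\<lambda>\<omega>'. H \<omega>' $ i $ j) \<omega>)"

end

theory Submission
  imports Defs
begin

definition orthon :: "nat \<Rightarrow> (nat \<Rightarrow> 'a::real_inner) \<Rightarrow> bool" where
  "orthon r u \<longleftrightarrow> (\<forall>i<r. \<forall>j<r. u i \<bullet> u j = (if i = j then 1 else 0))"

lemma inner_outer: "inner (A::real^'n^'m) (outer_prod u v) = u \<bullet> (A *v v)"
  unfolding outer_prod_def inner_vec_def matrix_vector_mult_def
  by (simp add: sum_distrib_left mult_ac)

lemma outer_inner: "inner (outer_prod u v) (outer_prod u' v') = (u \<bullet> u') * (v \<bullet> v')"
  unfolding outer_prod_def inner_vec_def
  by (simp add: sum_distrib_left sum_distrib_right mult_ac)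

lemma outer_mult: "outer_prod u v *v w = (v \<bullet> w) *\<^sub>R u"
  unfolding outer_prod_def inner_vec_def matrix_vector_mult_def
  by (simp add: vec_eq_iff sum_distrib_left mult_ac)

lemma outer_tmult: "transpose (outer_prod u v) *v w = (u \<bullet> w) *\<^sub>R v"
  unfolding outer_prod_def inner_vec_def matrix_vector_mult_def transpose_def
  by (simp add: vec_eq_iff sum_distrib_left mult_ac)

lemma tdot: "(transpose R *v x) \<bullet> y = x \<bullet> ((R::real^'n^'m) *v y)"
  by (simp add: dot_lmul_matrix)

lemma norm_sum_outer:
  assumes "orthon d u" "orthon d v"
  shows "(norm (\<Sum>i<d. c i *\<^sub>R outer_prod (u i) (v i)))\<^sup>2 = (\<Sum>i<d. (c i)\<^sup>2)"
proof -
  have "(norm (\<Sum>i<d. c i *\<^sub>R outer_prod (u i) (v i)))\<^sup>2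
     = (\<Sum>i<d. \<Sum>j<d. c i * (c j * ((u j \<bullet> u i) * (v j \<bullet> v i))))"
    by (simp add: power2_norm_eq_inner inner_sum_left inner_sum_right outer_inner sum_distrib_left)
  also have "\<dots> = (\<Sum>i<d. \<Sum>j<d. if i = j then c i * c j else 0)"
    using assms unfolding orthon_def by (intro sum.cong refl) auto
  also have "\<dots> = (\<Sum>i<d. (c i)\<^sup>2)"
    by (simp add: power2_eq_square)
  finally show ?thesis .
qed

lemma unit_eq:
  fixes a w :: "'a::real_inner"
  assumes a: "norm a = 1" and le: "\<And>x. norm x = 1 \<Longrightarrow> x \<bullet> w \<le> \<sigma>"
    and eq: "a \<bullet> w = \<sigma>" and pos: "\<sigma> > 0"
  shows "w = \<sigma> *\<^sub>R a"
proof -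
  have "w \<noteq> 0" using eq pos by auto
  then have "norm w > 0" by simp
  have "(w /\<^sub>R norm w) \<bullet> w \<le> \<sigma>" using le[of "w /\<^sub>R norm w"] \<open>w \<noteq> 0\<close> by simp
  moreover have "(w /\<^sub>R norm w) \<bullet> w = norm w"
    using \<open>norm w > 0\<close> by (simp add: power2_norm_eq_inner[symmetric] power2_eq_square)
  ultimately have "norm w \<le> \<sigma>" by simp
  have "(norm (w - \<sigma> *\<^sub>R a))\<^sup>2 = (norm w)\<^sup>2 - 2 * \<sigma> * (a \<bullet> w) + \<sigma>\<^sup>2 * (norm a)\<^sup>2"
    unfolding power2_norm_eq_inner by (simp add: inner_diff_left inner_diff_right inner_commute algebra_simps power2_eq_square)
  also have "\<dots> = (norm w)\<^sup>2 - \<sigma>\<^sup>2" using a eq by (simp add: power2_eq_square)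
  also have "\<dots> \<le> 0" using \<open>norm w \<le> \<sigma>\<close> \<open>norm w > 0\<close>
    by (simp add: abs_le_square_iff power_mono)
  finally show ?thesis by simp
qed

lemma exists_unit_orth:
  fixes u :: "nat \<Rightarrow> 'a::euclidean_space"
  assumes "r < DIM('a)"
  shows "\<exists>x. norm x = 1 \<and> (\<forall>i<r. x \<bullet> u i = 0)"
proof -
  have "dim (span (u ` {..<r})) \<le> card (u ` {..<r})"
    by (simp add: dim_le_card span_superset)
  also have "\<dots> \<le> r" using card_image_le[of "{..<r}" u] by simp
  finally have "span (u ` {..<r}) \<noteq> UNIV" using assms by (metis dim_UNIV not_le dim_span)
  then obtain a where a: "a \<noteq> 0" "\<forall>x\<in>span (u ` {..<r}). a \<bullet> x = 0"
    using span_not_UNIV_orthogonal by blast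
  have "\<forall>i<r. (a /\<^sub>R norm a) \<bullet> u i = 0" using a(2) by (simp add: span_base)
  moreover have "norm (a /\<^sub>R norm a) = 1" using a(1) by simp
  ultimately show ?thesis by blast
qed

lemma orthon_span:
  fixes u :: "nat \<Rightarrow> 'a::euclidean_space"
  assumes o: "orthon (DIM('a)) u"
  shows "span (u ` {..<DIM('a)}) = UNIV"
proof -
  let ?B = "u ` {..<DIM('a)}"
  have inj: "inj_on u {..<DIM('a)}"
  proof
    fix i j assume ij: "i \<in> {..<DIM('a)}" "j \<in> {..<DIM('a)}" "u i = u j"
    show "i = j"
    proof (rule ccontr)
      assume "i \<noteq> j"
      then have "u i \<bullet> u j = 0" using o ij(1,2) unfolding orthon_def by auto
      moreover have "u j \<bullet> u j = 1" using o ij(2) unfolding orthon_def by auto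
      ultimately show False using ij(3) by simp
    qed
  qed
  then have card: "card ?B = dim (UNIV::'a set)" by (simp add: card_image)
  have "pairwise orthogonal ?B"
    using o unfolding pairwise_def orthogonal_def orthon_def by auto
  moreover have "0 \<notin> ?B"
  proof
    assume "0 \<in> ?B" then obtain i where "i < DIM('a)" "u i = 0" by auto
    then show False using o unfolding orthon_def by force
  qed
  ultimately have "independent ?B" by (rule pairwise_orthogonal_independent)
  then have "UNIV \<subseteq> span ?B" using card_eq_dim[of ?B UNIV] card by simp
  then show ?thesis by auto
qed

lemma DIM_vec_real: "DIM(real^'m) = CARD('m)" by simp

lemma svd_vec_step:
  fixes R :: "real^'n^'m" and u :: "nat \<Rightarrow> real^'m" and v :: "nat \<Rightarrow> real^'n"
  assumes r: "r < CARD('m)" "r < CARD('n)"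
   and Rv: "\<forall>i<r. R *v v i = 0" and Ru: "\<forall>i<r. transpose R *v u i = 0"
  shows "\<exists>x y \<sigma>. norm x = 1 \<and> norm y = 1 \<and> 0 \<le> \<sigma> \<and> (\<forall>i<r. x \<bullet> u i = 0 \<and> y \<bullet> v i = 0)
           \<and> R *v y = \<sigma> *\<^sub>R x \<and> transpose R *v x = \<sigma> *\<^sub>R y"
proof (cases "R = 0")
  case True
  obtain x :: "real^'m" where x: "norm x = 1" "\<forall>i<r. x \<bullet> u i = 0"
    using exists_unit_orth[of r u] r by auto
  obtain y :: "real^'n" where y: "norm y = 1" "\<forall>i<r. y \<bullet> v i = 0"
    using exists_unit_orth[of r v] r by auto
  show ?thesis using x y True by (intro exI[of _ x] exI[of _ y] exI[of _ 0]) auto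
next
  case False
  let ?S = "sphere (0::real^'m) 1 \<times> sphere (0::real^'n) 1"
  let ?f = "\<lambda>p. fst p \<bullet> (R *v snd p)"
  have "compact ?S" by (intro compact_Times compact_sphere)
  moreover have "?S \<noteq> {}"
  proof -
    have "(axis undefined 1, axis undefined 1) \<in> ?S" by simp
    then show ?thesis by blast
  qed
  moreover have "continuous_on ?S ?f"
    by (intro continuous_intros linear_continuous_on_compose[OF _ matrix_vector_mul_linear[of R]]) 
  ultimately obtain p where p: "p \<in> ?S" "\<forall>q\<in>?S. ?f q \<le> ?f p"
    using continuous_attains_sup[of ?S ?f] by blast
  define x where "x = fst p"
  define y where "y = snd p"
  define \<sigma> where "\<sigma> = x \<bullet> (R *v y)"
  have nx: "norm x = 1" and ny: "norm y = 1" using p(1) by (auto simp: x_def y_def)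
  have max: "\<And>x' y'. norm x' = 1 \<Longrightarrow> norm y' = 1 \<Longrightarrow> x' \<bullet> (R *v y') \<le> \<sigma>"
    using p(2) unfolding \<sigma>_def x_def y_def by fastforce
  obtain i j where ij: "R $ i $ j \<noteq> 0" using False by (metis vec_eq_iff zero_index)
  have "(sgn (R $ i $ j) *\<^sub>R axis i 1) \<bullet> (R *v axis j 1) = \<bar>R $ i $ j\<bar>"
    by (simp add: matrix_vector_mult_basis column_def inner_axis' abs_sgn mult.commute)
  moreover have "norm (sgn (R $ i $ j) *\<^sub>R axis i (1::real)) = 1" using ij by (simp add: abs_sgn_eq)
  ultimately have "\<bar>R $ i $ j\<bar> \<le> \<sigma>" using max[of "sgn (R $ i $ j) *\<^sub>R axis i 1" "axis j 1"] by simp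
  then have spos: "\<sigma> > 0" using ij by simp
  have "\<And>x'. norm x' = 1 \<Longrightarrow> x' \<bullet> (R *v y) \<le> \<sigma>" using max ny by blast
  then have e1: "R *v y = \<sigma> *\<^sub>R x"
    by (rule unit_eq[OF nx _ \<sigma>_def[symmetric] spos])
  have tv: "\<And>y'. y' \<bullet> (transpose R *v x) = x \<bullet> (R *v y')"
    using tdot[of R x] by (metis inner_commute tdot)
  have le2: "\<And>y'. norm y' = 1 \<Longrightarrow> y' \<bullet> (transpose R *v x) \<le> \<sigma>" using max nx tv by metis
  have eq2: "y \<bullet> (transpose R *v x) = \<sigma>" unfolding \<sigma>_def by (rule tv)
  have e2: "transpose R *v x = \<sigma> *\<^sub>R y"
    by (rule unit_eq[OF ny le2 eq2 spos])
  have "\<forall>i<r. x \<bullet> u i = 0 \<and> y \<bullet> v i = 0"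
  proof (intro allI impI conjI)
    fix i assume "i < r"
    have "\<sigma> * (x \<bullet> u i) = (R *v y) \<bullet> u i" using e1 by simp
    also have "\<dots> = (transpose R *v u i) \<bullet> y" by (simp only: tdot inner_commute[of "R *v y" "u i"])
    also have "\<dots> = 0" using Ru \<open>i < r\<close> by simp
    finally show "x \<bullet> u i = 0" using spos by simp
    have "\<sigma> * (y \<bullet> v i) = (transpose R *v x) \<bullet> v i" using e2 by simp
    also have "\<dots> = x \<bullet> (R *v v i)" by (simp only: tdot)
    also have "\<dots> = 0" using Rv \<open>i < r\<close> by simp
    finally show "y \<bullet> v i = 0" using spos by simp
  qed
  then show ?thesis using nx ny spos e1 e2 by (intro exI[of _ x] exI[of _ y] exI[of _ \<sigma>]) auto
qed

lemma tmv_diff: "transpose (A - B) *v x = transpose A *v x - transpose (B::real^'n^'m) *v x"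
  unfolding transpose_def matrix_vector_mult_def by (simp add: vec_eq_iff sum_subtractf algebra_simps)

lemma tmv_souter: "transpose (c *\<^sub>R outer_prod u v) *v w = (c * (u \<bullet> w)) *\<^sub>R v"
  unfolding outer_prod_def inner_vec_def matrix_vector_mult_def transpose_def
  by (simp add: vec_eq_iff sum_distrib_left mult_ac)

lemma mv_souter: "(c *\<^sub>R outer_prod u v) *v w = (c * (v \<bullet> w)) *\<^sub>R u"
  unfolding outer_prod_def inner_vec_def matrix_vector_mult_def
  by (simp add: vec_eq_iff sum_distrib_left mult_ac)

lemma svd_partial:
  fixes G :: "real^'n^'m"
  assumes "r \<le> min CARD('m) CARD('n)"
  shows "\<exists>u v s. orthon r u \<and> orthon r v \<and> (\<forall>i<r. 0 \<le> s i) \<and>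
     (\<forall>i<r. (G - (\<Sum>k<r. s k *\<^sub>R outer_prod (u k) (v k))) *v v i = 0 \<and>
            transpose (G - (\<Sum>k<r. s k *\<^sub>R outer_prod (u k) (v k))) *v u i = 0)"
  using assms
proof (induction r)
  case 0
  show ?case by (simp add: orthon_def)
next
  case (Suc r)
  then obtain u v s where ou: "orthon r u" and ov: "orthon r v" and sp: "\<forall>i<r. 0 \<le> s i"
    and Rz: "\<forall>i<r. (G - (\<Sum>k<r. s k *\<^sub>R outer_prod (u k) (v k))) *v v i = 0 \<and>
            transpose (G - (\<Sum>k<r. s k *\<^sub>R outer_prod (u k) (v k))) *v u i = 0"
    by auto
  define R where "R = G - (\<Sum>k<r. s k *\<^sub>R outer_prod (u k) (v k))"
  have "r < CARD('m)" "r < CARD('n)" using Suc.prems by auto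
  then obtain x y \<sigma> where xy: "norm x = 1" "norm y = 1" "0 \<le> \<sigma>"
     "\<forall>i<r. x \<bullet> u i = 0 \<and> y \<bullet> v i = 0" "R *v y = \<sigma> *\<^sub>R x" "transpose R *v x = \<sigma> *\<^sub>R y"
    using svd_vec_step[of r R v u] Rz unfolding R_def by blast
  define u' where "u' = u(r := x)"
  define v' where "v' = v(r := y)"
  define s' where "s' = s(r := \<sigma>)"
  have sum: "(\<Sum>k<Suc r. s' k *\<^sub>R outer_prod (u' k) (v' k))
      = (\<Sum>k<r. s k *\<^sub>R outer_prod (u k) (v k)) + \<sigma> *\<^sub>R outer_prod x y"
    unfolding u'_def v'_def s'_def by (simp add: sum.lessThan_Suc)
  have R': "G - (\<Sum>k<Suc r. s' k *\<^sub>R outer_prod (u' k) (v' k)) = R - \<sigma> *\<^sub>R outer_prod x y"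
    unfolding sum R_def by simp
  have xx: "x \<bullet> x = 1" "y \<bullet> y = 1" using xy(1,2) by (simp_all add: norm_eq_1)
  have o1: "orthon (Suc r) u'"
    using ou xy(4) xx unfolding orthon_def u'_def
    by (auto simp: less_Suc_eq inner_commute)
  have o2: "orthon (Suc r) v'"
    using ov xy(4) xx unfolding orthon_def v'_def
    by (auto simp: less_Suc_eq inner_commute)
  have o3: "\<forall>i<Suc r. 0 \<le> s' i" using sp xy(3) unfolding s'_def by (auto simp: less_Suc_eq)
  have o4: "\<forall>i<Suc r. (R - \<sigma> *\<^sub>R outer_prod x y) *v v' i = 0 \<and>
            transpose (R - \<sigma> *\<^sub>R outer_prod x y) *v u' i = 0"
  proof (intro allI impI conjI)
    fix i assume i: "i < Suc r"
    show "(R - \<sigma> *\<^sub>R outer_prod x y) *v v' i = 0"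
    proof (cases "i = r")
      case True
      then show ?thesis using xy(5) xx by (simp add: v'_def matrix_vector_mult_diff_rdistrib mv_souter)
    next
      case False
      then have "i < r" using i by simp
      then show ?thesis using Rz xy(4) False unfolding R_def[symmetric]
        by (simp add: v'_def matrix_vector_mult_diff_rdistrib mv_souter inner_commute)
    qed
    show "transpose (R - \<sigma> *\<^sub>R outer_prod x y) *v u' i = 0"
    proof (cases "i = r")
      case True
      then show ?thesis using xy(6) xx by (simp only: u'_def tmv_diff tmv_souter) simp
    next
      case False
      then have "i < r" using i by simp
      then show ?thesis using Rz xy(4) False unfolding R_def[symmetric]
        by (simp only: u'_def tmv_diff tmv_souter) (simp add: inner_commute)
    qed
  qed
  have o5: "\<forall>i<Suc r. (G - (\<Sum>k<Suc r. s' k *\<^sub>R outer_prod (u' k) (v' k))) *v v' i = 0 \<and>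
            transpose (G - (\<Sum>k<Suc r. s' k *\<^sub>R outer_prod (u' k) (v' k))) *v u' i = 0"
    using o4 by (simp only: R')
  show ?case
    by (intro exI[of _ u'] exI[of _ v'] exI[of _ s'] conjI o1 o2 o3 o5)
qed

lemma svd_exists:
  fixes G :: "real^'n^'m"
  shows "\<exists>u v s. is_thin_svd G u v s"
proof -
  let ?d = "min CARD('m) CARD('n)"
  obtain u v s where ou: "orthon ?d u" and ov: "orthon ?d v" and sp: "\<forall>i<?d. 0 \<le> s i"
    and Rz: "\<forall>i<?d. (G - (\<Sum>k<?d. s k *\<^sub>R outer_prod (u k) (v k))) *v v i = 0 \<and>
            transpose (G - (\<Sum>k<?d. s k *\<^sub>R outer_prod (u k) (v k))) *v u i = 0"
    using svd_partial[of ?d G] by auto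
  define R where "R = G - (\<Sum>k<?d. s k *\<^sub>R outer_prod (u k) (v k))"
  have "R = 0"
  proof (cases "CARD('m) \<le> CARD('n)")
    case True
    then have d: "?d = DIM(real^'m)" by simp
    have sp: "span (u ` {..<DIM(real^'m)}) = UNIV" using ou d by (intro orthon_span) simp
    have "transpose R *v z = 0" for z
    proof -
      have "z \<in> span (u ` {..<DIM(real^'m)})" using sp by simp
      moreover have "\<forall>i<?d. transpose R *v u i = 0" using Rz unfolding R_def by blast
      ultimately show ?thesis
        using linear_eq_0_on_span[OF matrix_vector_mul_linear[of "transpose R"], of "u ` {..<DIM(real^'m)}" z] d
        by auto
    qed
    then have "transpose R = 0" by (simp add: matrix_eq)
    then show ?thesis unfolding vec_eq_iff transpose_def by simp
  next
    case False
    then have d: "?d = DIM(real^'n)" by simp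
    have sp: "span (v ` {..<DIM(real^'n)}) = UNIV" using ov d by (intro orthon_span) simp
    have "R *v z = 0" for z
    proof -
      have "z \<in> span (v ` {..<DIM(real^'n)})" using sp by simp
      moreover have "\<forall>i<?d. R *v v i = 0" using Rz unfolding R_def by blast
      ultimately show ?thesis
        using linear_eq_0_on_span[OF matrix_vector_mul_linear[of R], of "v ` {..<DIM(real^'n)}" z] d
        by auto
    qed
    then show "R = 0" by (simp add: matrix_eq)
  qed
  then have "G = (\<Sum>k<?d. s k *\<^sub>R outer_prod (u k) (v k))" unfolding R_def by simp
  then show ?thesis using ou ov sp unfolding is_thin_svd_def svd_rank_def orthon_def Let_def by blast
qed

lemma inner_sum_outer:
  assumes "orthon d u" "orthon d v"
  shows "inner (\<Sum>i<d. a i *\<^sub>R outer_prod (u i) (v i)) (\<Sum>i<d. b i *\<^sub>R outer_prod (u i) (v i)) = (\<Sum>i<d. a i * b i)"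
proof -
  have "inner (\<Sum>i<d. a i *\<^sub>R outer_prod (u i) (v i)) (\<Sum>i<d. b i *\<^sub>R outer_prod (u i) (v i))
     = (\<Sum>i<d. \<Sum>j<d. b i * (a j * ((u j \<bullet> u i) * (v j \<bullet> v i))))"
    by (simp add: inner_sum_left inner_sum_right outer_inner sum_distrib_left)
  also have "\<dots> = (\<Sum>i<d. \<Sum>j<d. if i = j then b i * a j else 0)"
    using assms unfolding orthon_def by (intro sum.cong refl) auto
  also have "\<dots> = (\<Sum>i<d. a i * b i)"
    by (simp add: mult.commute)
  finally show ?thesis .
qed

lemma bessel:
  fixes x :: "'a::real_inner"
  assumes o: "orthon d u"
  shows "(\<Sum>i<d. (x \<bullet> u i)\<^sup>2) \<le> (norm x)\<^sup>2"
proof -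
  let ?p = "\<Sum>i<d. (x \<bullet> u i) *\<^sub>R u i"
  have pp: "?p \<bullet> ?p = (\<Sum>i<d. (x \<bullet> u i)\<^sup>2)"
  proof -
    have "?p \<bullet> ?p = (\<Sum>i<d. \<Sum>j<d. (x \<bullet> u i) * ((x \<bullet> u j) * (u j \<bullet> u i)))"
      by (simp add: inner_sum_left inner_sum_right sum_distrib_left)
    also have "\<dots> = (\<Sum>i<d. \<Sum>j<d. if i = j then (x \<bullet> u i) * (x \<bullet> u j) else 0)"
      using o unfolding orthon_def by (intro sum.cong refl) auto
    finally show ?thesis by (simp add: power2_eq_square)
  qed
  have xp: "x \<bullet> ?p = (\<Sum>i<d. (x \<bullet> u i)\<^sup>2)"
    by (simp add: inner_sum_right power2_eq_square)
  have "0 \<le> (x - ?p) \<bullet> (x - ?p)" by simp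
  also have "\<dots> = x \<bullet> x - 2 * (x \<bullet> ?p) + ?p \<bullet> ?p"
    by (simp add: inner_diff_left inner_diff_right inner_commute)
  finally show ?thesis using pp xp by (simp add: power2_norm_eq_inner)
qed

lemma outer_inner_l: "inner (outer_prod u v) (A::real^'n^'m) = u \<bullet> (A *v v)"
  using inner_outer[of A u v] inner_commute[of A "outer_prod u v"] by simp

definition opball :: "real \<Rightarrow> (real^'n^'m) set" where
  "opball \<tau> = {A. \<forall>x y. norm x = 1 \<longrightarrow> norm y = 1 \<longrightarrow> x \<bullet> (A *v y) \<le> \<tau>}"

lemma clip_rep:
  fixes G :: "real^'n^'m"
  shows "\<exists>u v s. is_thin_svd G u v s \<and>
   spec_clip \<tau> G = (\<Sum>i<svd_rank TYPE('n) TYPE('m). min (s i) \<tau> *\<^sub>R outer_prod (u i) (v i))"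
proof -
  obtain u v s where "is_thin_svd G u v s" using svd_exists by blast
  then have "\<exists>C u v s. is_thin_svd G u v s \<and>
      C = (\<Sum>i<svd_rank TYPE('n) TYPE('m). min (s i) \<tau> *\<^sub>R outer_prod (u i) (v i))" by blast
  from someI_ex[OF this] show ?thesis unfolding spec_clip_def by blast
qed

lemma clip_props:
  fixes G :: "real^'n^'m"
  assumes tau: "\<tau> \<ge> 0"
  shows "(norm (spec_clip \<tau> G))\<^sup>2 \<le> real (min CARD('m) CARD('n)) * \<tau>\<^sup>2"
    and "norm (spec_clip \<tau> G) \<le> norm G"
    and "spec_clip \<tau> G \<in> opball \<tau>"
    and "\<And>A. A \<in> opball \<tau> \<Longrightarrow> inner (G - spec_clip \<tau> G) (A - spec_clip \<tau> G) \<le> 0"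
proof -
  let ?d = "min CARD('m) CARD('n)"
  obtain u v s where svd: "is_thin_svd G u v s" and C:
    "spec_clip \<tau> G = (\<Sum>i<?d. min (s i) \<tau> *\<^sub>R outer_prod (u i) (v i))"
    using clip_rep[of G \<tau>] unfolding svd_rank_def by blast
  have ou: "orthon ?d u" and ov: "orthon ?d v" and sp: "\<forall>i<?d. 0 \<le> s i"
    and G: "G = (\<Sum>i<?d. s i *\<^sub>R outer_prod (u i) (v i))"
    using svd unfolding is_thin_svd_def svd_rank_def orthon_def Let_def by auto
  have nC: "(norm (spec_clip \<tau> G))\<^sup>2 = (\<Sum>i<?d. (min (s i) \<tau>)\<^sup>2)"
    unfolding C by (rule norm_sum_outer[OF ou ov])
  also have "\<dots> \<le> (\<Sum>i<?d. \<tau>\<^sup>2)"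
    using sp tau by (intro sum_mono power_mono) auto
  finally show "(norm (spec_clip \<tau> G))\<^sup>2 \<le> real ?d * \<tau>\<^sup>2" by simp
  have "(\<Sum>i<?d. (min (s i) \<tau>)\<^sup>2) \<le> (\<Sum>i<?d. (s i)\<^sup>2)"
    using sp tau by (intro sum_mono power_mono) auto
  also have "\<dots> = (norm G)\<^sup>2" unfolding G by (rule norm_sum_outer[OF ou ov, symmetric])
  finally have "(norm (spec_clip \<tau> G))\<^sup>2 \<le> (norm G)\<^sup>2" using nC by linarith
  from power2_le_imp_le[OF this norm_ge_zero] show "norm (spec_clip \<tau> G) \<le> norm G" .
  have nu: "\<And>i. i < ?d \<Longrightarrow> norm (u i) = 1" "\<And>i. i < ?d \<Longrightarrow> norm (v i) = 1"
  proof -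
    fix i assume "i < ?d"
    then have "u i \<bullet> u i = 1" "v i \<bullet> v i = 1" using ou ov unfolding orthon_def by simp_all
    then show "norm (u i) = 1" "norm (v i) = 1" by (simp_all add: norm_eq_1)
  qed
  show "spec_clip \<tau> G \<in> opball \<tau>"
    unfolding opball_def
  proof (intro CollectI allI impI)
    fix x :: "real^'m" and y :: "real^'n" assume x: "norm x = 1" and y: "norm y = 1"
    have "x \<bullet> (spec_clip \<tau> G *v y) = (\<Sum>i<?d. min (s i) \<tau> * ((u i \<bullet> x) * (v i \<bullet> y)))"
      unfolding inner_outer[symmetric] C by (simp add: inner_sum_left outer_inner)
    also have "\<dots> \<le> (\<Sum>i<?d. \<tau> * (((u i \<bullet> x)\<^sup>2 + (v i \<bullet> y)\<^sup>2) / 2))"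
    proof (intro sum_mono)
      fix i assume "i \<in> {..<?d}"
      then have m: "0 \<le> min (s i) \<tau>" "min (s i) \<tau> \<le> \<tau>" using sp tau by auto
      have "(u i \<bullet> x) * (v i \<bullet> y) \<le> ((u i \<bullet> x)\<^sup>2 + (v i \<bullet> y)\<^sup>2) / 2"
        using sum_squares_bound[of "u i \<bullet> x" "v i \<bullet> y"] by (simp add: field_simps)
      have "min (s i) \<tau> * ((u i \<bullet> x) * (v i \<bullet> y)) \<le> min (s i) \<tau> * (((u i \<bullet> x)\<^sup>2 + (v i \<bullet> y)\<^sup>2) / 2)"
        using m \<open>(u i \<bullet> x) * (v i \<bullet> y) \<le> _\<close> by (intro mult_left_mono) auto
      also have "\<dots> \<le> \<tau> * (((u i \<bullet> x)\<^sup>2 + (v i \<bullet> y)\<^sup>2) / 2)"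
        using m by (intro mult_right_mono) auto
      finally show "min (s i) \<tau> * ((u i \<bullet> x) * (v i \<bullet> y)) \<le> \<tau> * (((u i \<bullet> x)\<^sup>2 + (v i \<bullet> y)\<^sup>2) / 2)" .
    qed
    also have "\<dots> = (\<Sum>i<?d. \<tau>/2 * (x \<bullet> u i)\<^sup>2 + \<tau>/2 * (y \<bullet> v i)\<^sup>2)"
      by (intro sum.cong refl) (simp add: inner_commute field_simps)
    also have "\<dots> = \<tau>/2 * (\<Sum>i<?d. (x \<bullet> u i)\<^sup>2) + \<tau>/2 * (\<Sum>i<?d. (y \<bullet> v i)\<^sup>2)"
      by (simp only: sum.distrib sum_distrib_left)
    also have "\<dots> = \<tau> * ((\<Sum>i<?d. (x \<bullet> u i)\<^sup>2) + (\<Sum>i<?d. (y \<bullet> v i)\<^sup>2)) / 2"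
      by (simp add: field_simps)
    also have "\<dots> \<le> \<tau> * ((norm x)\<^sup>2 + (norm y)\<^sup>2) / 2"
      using bessel[OF ou, of x] bessel[OF ov, of y] tau
      by (intro divide_right_mono mult_left_mono add_mono) auto
    also have "\<dots> = \<tau>" using x y by simp
    finally show "x \<bullet> (spec_clip \<tau> G *v y) \<le> \<tau>" .
  qed
  fix A :: "real^'n^'m" assume A: "A \<in> opball \<tau>"
  have GC: "G - spec_clip \<tau> G = (\<Sum>i<?d. (s i - min (s i) \<tau>) *\<^sub>R outer_prod (u i) (v i))"
    unfolding C by (subst G) (simp add: sum_subtractf scaleR_diff_left)
  have "inner (G - spec_clip \<tau> G) A = (\<Sum>i<?d. (s i - min (s i) \<tau>) * (u i \<bullet> (A *v v i)))"
    unfolding GC by (simp add: inner_sum_left outer_inner_l)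
  also have "\<dots> \<le> (\<Sum>i<?d. (s i - min (s i) \<tau>) * \<tau>)"
  proof (intro sum_mono mult_left_mono)
    fix i assume "i \<in> {..<?d}"
    then have i: "i < ?d" by simp
    have "\<forall>x y. norm x = 1 \<longrightarrow> norm y = 1 \<longrightarrow> x \<bullet> (A *v y) \<le> \<tau>" using A unfolding opball_def by simp
    from this[rule_format, OF nu(1)[OF i] nu(2)[OF i]] show "u i \<bullet> (A *v v i) \<le> \<tau>" .
  qed auto
  also have "\<dots> = inner (G - spec_clip \<tau> G) (spec_clip \<tau> G)"
    unfolding GC by (subst C, subst inner_sum_outer[OF ou ov]) (auto intro!: sum.cong simp: min_def)
  finally show "inner (G - spec_clip \<tau> G) (A - spec_clip \<tau> G) \<le> 0"
    by (simp add: inner_diff_right)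
qed

lemma clip_nonexp:
  fixes G H :: "real^'n^'m"
  assumes tau: "\<tau> \<ge> 0"
  shows "norm (spec_clip \<tau> G - spec_clip \<tau> H) \<le> norm (G - H)"
proof -
  let ?a = "spec_clip \<tau> G" and ?b = "spec_clip \<tau> H"
  have 1: "inner (G - ?a) (?b - ?a) \<le> 0" by (rule clip_props(4)[OF tau clip_props(3)[OF tau]])
  have 2: "inner (H - ?b) (?a - ?b) \<le> 0" by (rule clip_props(4)[OF tau clip_props(3)[OF tau]])
  have "(norm (?a - ?b))\<^sup>2 \<le> inner (G - H) (?a - ?b)"
    using 1 2 unfolding power2_norm_eq_inner
    by (simp add: inner_diff_left inner_diff_right inner_commute algebra_simps)
  also have "\<dots> \<le> norm (G - H) * norm (?a - ?b)" by (rule Cauchy_Schwarz_ineq2[THEN order_trans[OF abs_ge_self]])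
  finally have "(norm (?a - ?b))\<^sup>2 \<le> norm (G - H) * norm (?a - ?b)" .
  then show ?thesis
    by (cases "norm (?a - ?b) = 0") (auto simp: power2_eq_square)
qed

lemma clip_cont:
  assumes "\<tau> \<ge> 0"
  shows "continuous_on UNIV (spec_clip \<tau> :: real^'n^'m \<Rightarrow> _)"
proof (rule lipschitz_on_continuous_on)
  show "1-lipschitz_on UNIV (spec_clip \<tau> :: real^'n^'m \<Rightarrow> _)"
    by (rule lipschitz_onI) (auto simp: dist_norm clip_nonexp[OF assms])
qed

lemma clip_meas [measurable]:
  assumes "\<tau> \<ge> 0"
  shows "(spec_clip \<tau> :: real^'n^'m \<Rightarrow> _) \<in> borel_measurable borel"
  by (rule borel_measurable_continuous_onI[OF clip_cont[OF assms]])

lemma vec_nth_meas [measurable]: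
  fixes Z :: "'a \<Rightarrow> 'b::real_normed_vector^'n"
  assumes "Z \<in> borel_measurable N"
  shows "(\<lambda>\<omega>. Z \<omega> $ i) \<in> borel_measurable N"
  using measurable_compose[OF assms borel_measurable_continuous_onI[OF linear_continuous_on[OF bounded_linear_vec_nth]]]
  by simp

lemma norm_sq_entries: "(norm (A::real^'n^'m))\<^sup>2 = (\<Sum>i\<in>UNIV. \<Sum>j\<in>UNIV. (A $ i $ j)\<^sup>2)"
  unfolding power2_norm_eq_inner by (simp add: inner_vec_def power2_eq_square)

lemma inner_entries: "inner (A::real^'n^'m) B = (\<Sum>i\<in>UNIV. \<Sum>j\<in>UNIV. A $ i $ j * B $ i $ j)"
  by (simp add: inner_vec_def)

lemma entry_le_norm:
  fixes A :: "real^'n^'m"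
  shows "\<bar>A $ i $ j\<bar> \<le> norm A"
proof -
  have "\<bar>A $ i $ j\<bar> \<le> norm (A $ i)" by (rule component_le_norm_cart)
  also have "norm (A $ i) \<le> norm A" by (rule Finite_Cartesian_Product.norm_nth_le)
  finally show ?thesis .
qed

lemma clip_norm_le:
  assumes "\<tau> \<ge> 0"
  shows "norm (spec_clip \<tau> (G::real^'n^'m)) \<le> sqrt (real (min CARD('m) CARD('n))) * \<tau>"
proof -
  have sq: "(norm (spec_clip \<tau> G))\<^sup>2 \<le> (sqrt (real (min CARD('m) CARD('n))) * \<tau>)\<^sup>2"
    using clip_props(1)[OF assms, of G] by (simp add: power_mult_distrib)
  show ?thesis by (rule power2_le_imp_le[OF sq]) (simp add: assms)
qed

lemma clip_diff_bound:
  fixes G H :: "real^'n^'m"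
  assumes tau: "\<tau> > 0" and a: "1 < \<alpha>" "\<alpha> \<le> 2"
  shows "(norm (spec_clip \<tau> G - spec_clip \<tau> H))\<^sup>2
    \<le> 2 powr (2 - \<alpha>) * \<tau> powr (2 - \<alpha>) * real (min CARD('m) CARD('n)) powr (1 - \<alpha>/2) * norm (G - H) powr \<alpha>"
proof -
  let ?d = "real (min CARD('m) CARD('n))"
  let ?t = "norm (spec_clip \<tau> G - spec_clip \<tau> H)"
  let ?b = "2 * sqrt ?d * \<tau>"
  have t1: "?t \<le> norm (G - H)" using clip_nonexp[of \<tau> G H] tau by simp
  have t2: "?t \<le> ?b"
  proof -
    have "?t \<le> norm (spec_clip \<tau> G) + norm (spec_clip \<tau> H)" by (rule norm_triangle_ineq4)
    also have "\<dots> \<le> sqrt ?d * \<tau> + sqrt ?d * \<tau>" using clip_norm_le[of \<tau>] tau by (intro add_mono) auto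
    finally show ?thesis by (simp add: algebra_simps)
  qed
  have dpos: "?d > 0" by simp
  have b: "?b powr (2 - \<alpha>) = 2 powr (2 - \<alpha>) * \<tau> powr (2 - \<alpha>) * ?d powr (1 - \<alpha>/2)"
  proof -
    have "?b powr (2 - \<alpha>) = 2 powr (2 - \<alpha>) * sqrt ?d powr (2 - \<alpha>) * \<tau> powr (2 - \<alpha>)"
      using tau by (simp add: powr_mult)
    moreover have "sqrt ?d powr (2 - \<alpha>) = ?d powr (1 - \<alpha>/2)"
      using dpos by (simp add: powr_half_sqrt[symmetric] powr_powr field_simps)
    ultimately show ?thesis by simp
  qed
  show ?thesis
  proof (cases "?t = 0")
    case True
    then show ?thesis using tau by simp
  next
    case False
    then have tp: "?t > 0" by simp
    have "?t powr \<alpha> * ?t powr (2 - \<alpha>) = ?t powr (\<alpha> + (2 - \<alpha>))" by (rule powr_add[symmetric])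
    also have "\<dots> = ?t powr 2" by simp
    also have "\<dots> = ?t\<^sup>2" using powr_realpow[OF tp, of 2] by simp
    finally have "?t\<^sup>2 = ?t powr \<alpha> * ?t powr (2 - \<alpha>)" ..
    also have "\<dots> \<le> norm (G - H) powr \<alpha> * ?b powr (2 - \<alpha>)"
      using t1 t2 tp a by (intro mult_mono powr_mono2) auto
    finally show ?thesis unfolding b by (simp add: mult_ac)
  qed
qed

lemma grad_bound:
  fixes f :: "'v::real_inner \<Rightarrow> real"
  assumes Lpos: "L > 0"
    and smooth: "\<And>A B. f A \<le> f B + gradf B \<bullet> (A - B) + L / 2 * (norm (A - B))\<^sup>2"
    and bdd: "bdd_below (range f)"
  shows "(norm (gradf B))\<^sup>2 \<le> 2 * L * (f B - (INF Y. f Y))"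
proof -
  let ?A = "B - (1/L) *\<^sub>R gradf B"
  have "(INF Y. f Y) \<le> f ?A" using bdd by (simp add: cINF_lower)
  also have "\<dots> \<le> f B + gradf B \<bullet> (?A - B) + L / 2 * (norm (?A - B))\<^sup>2" by (rule smooth)
  also have "\<dots> = f B - (norm (gradf B))\<^sup>2 / (2 * L)"
  proof -
    have "gradf B \<bullet> (?A - B) = - (1/L) * (norm (gradf B))\<^sup>2" by (simp add: power2_norm_eq_inner)
    moreover have "(norm (?A - B))\<^sup>2 = (1/L)\<^sup>2 * (norm (gradf B))\<^sup>2" using Lpos by (simp add: power_divide)
    ultimately show ?thesis using Lpos by (simp add: field_simps power2_eq_square)
  qed
  finally show ?thesis using Lpos by (simp add: field_simps)
qed

lemma gradf_meas:
  fixes f :: "'v::euclidean_space \<Rightarrow> real"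
  assumes grad: "\<And>Y. (f has_derivative (\<lambda>H. gradf Y \<bullet> H)) (at Y)"
  shows "gradf \<in> borel_measurable borel"
proof -
  have fc: "continuous_on UNIV f"
    using grad has_derivative_continuous continuous_at_imp_continuous_on by blast
  have fm[measurable]: "f \<in> borel_measurable borel" by (rule borel_measurable_continuous_onI[OF fc])
  have "(\<lambda>Y. gradf Y \<bullet> b) \<in> borel_measurable borel" for b
  proof (rule borel_measurable_LIMSEQ_real)
    fix Y :: 'v
    have lin: "((\<lambda>t::real. Y + t *\<^sub>R b) has_derivative (\<lambda>t. t *\<^sub>R b)) (at 0)"
      by (auto intro!: derivative_eq_intros)
    have "((\<lambda>t. f (Y + t *\<^sub>R b)) has_derivative (\<lambda>t. gradf (Y + 0 *\<^sub>R b) \<bullet> (t *\<^sub>R b))) (at 0)"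
      by (rule has_derivative_compose[OF lin grad])
    then have "((\<lambda>t. f (Y + t *\<^sub>R b)) has_derivative (\<lambda>t. (gradf Y \<bullet> b) * t)) (at 0)"
      by (simp add: mult.commute)
    then have "((\<lambda>t. f (Y + t *\<^sub>R b)) has_field_derivative (gradf Y \<bullet> b)) (at 0)"
      by (simp add: has_field_derivative_def)
    then have lim: "((\<lambda>t. (f (Y + t *\<^sub>R b) - f (Y + 0 *\<^sub>R b)) / (t - 0)) \<longlongrightarrow> gradf Y \<bullet> b) (at 0)"
      by (simp add: has_field_derivative_iff)
    have seq: "filterlim (\<lambda>n. inverse (real (Suc n))) (at 0) sequentially"
      unfolding filterlim_at using LIMSEQ_inverse_real_of_nat by auto
    from filterlim_compose[OF lim seq]
    show "(\<lambda>n. (f (Y + inverse (real (Suc n)) *\<^sub>R b) - f Y) / inverse (real (Suc n))) \<longlonglongrightarrow> gradf Y \<bullet> b"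
      by simp
  next
    fix n
    show "(\<lambda>Y. (f (Y + inverse (real (Suc n)) *\<^sub>R b) - f Y) / inverse (real (Suc n))) \<in> borel_measurable borel"
      by measurable
  qed
  then show ?thesis by (subst borel_measurable_euclidean_space) auto
qed

lemma cond_inner:
  fixes Z W :: "'a \<Rightarrow> real^'n^'m"
  assumes sf: "sigma_finite_subalgebra M F" and fm: "finite_measure M"
    and Zm: "Z \<in> borel_measurable F" and Zb: "\<And>\<omega>. \<omega> \<in> space M \<Longrightarrow> norm (Z \<omega>) \<le> bz"
    and Wm: "W \<in> borel_measurable M" and Wb: "\<And>\<omega>. \<omega> \<in> space M \<Longrightarrow> norm (W \<omega>) \<le> bw"
  shows "integrable M (\<lambda>\<omega>. inner (Z \<omega>) (W \<omega>))"
    "integrable M (\<lambda>\<omega>. inner (Z \<omega>) (mat_cond_exp M F W \<omega>))"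
    "(\<integral>\<omega>. inner (Z \<omega>) (mat_cond_exp M F W \<omega>) \<partial>M) = (\<integral>\<omega>. inner (Z \<omega>) (W \<omega>) \<partial>M)"
proof -
  interpret sigma_finite_subalgebra M F by (rule sf)
  interpret finite_measure M by (rule fm)
  have ZmM: "Z \<in> borel_measurable M" by (rule measurable_from_subalg[OF subalg Zm])
  have ci: "integrable M (\<lambda>\<omega>. Z \<omega> $ i $ j * W \<omega> $ i $ j)" for i j
  proof (rule integrable_const_bound[where B = "bz * bw"])
    show "AE \<omega> in M. norm (Z \<omega> $ i $ j * W \<omega> $ i $ j) \<le> bz * bw"
    proof (rule AE_I2)
      fix \<omega> assume w: "\<omega> \<in> space M"
      have "\<bar>Z \<omega> $ i $ j\<bar> \<le> bz" using entry_le_norm[of "Z \<omega>" i j] Zb[OF w] by linarith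
      moreover have "\<bar>W \<omega> $ i $ j\<bar> \<le> bw" using entry_le_norm[of "W \<omega>" i j] Wb[OF w] by linarith
      ultimately show "norm (Z \<omega> $ i $ j * W \<omega> $ i $ j) \<le> bz * bw"
        by (simp add: abs_mult mult_mono')
    qed
    show "(\<lambda>\<omega>. Z \<omega> $ i $ j * W \<omega> $ i $ j) \<in> borel_measurable M"
      using ZmM Wm by measurable
  qed
  have Zij: "(\<lambda>\<omega>. Z \<omega> $ i $ j) \<in> borel_measurable F" for i j using Zm by measurable
  have Wij: "(\<lambda>\<omega>. W \<omega> $ i $ j) \<in> borel_measurable M" for i j using Wm by measurable
  note rc = real_cond_exp_intg[OF ci Zij Wij]
  have e1: "(\<lambda>\<omega>. inner (Z \<omega>) (W \<omega>)) = (\<lambda>\<omega>. \<Sum>i\<in>UNIV. \<Sum>j\<in>UNIV. Z \<omega> $ i $ j * W \<omega> $ i $ j)"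
    by (simp add: inner_entries)
  have e2: "(\<lambda>\<omega>. inner (Z \<omega>) (mat_cond_exp M F W \<omega>)) =
     (\<lambda>\<omega>. \<Sum>i\<in>UNIV. \<Sum>j\<in>UNIV. Z \<omega> $ i $ j * real_cond_exp M F (\<lambda>\<omega>'. W \<omega>' $ i $ j) \<omega>)"
    by (simp add: inner_entries mat_cond_exp_def)
  show "integrable M (\<lambda>\<omega>. inner (Z \<omega>) (W \<omega>))"
    unfolding e1 using ci by (intro Bochner_Integration.integrable_sum) auto
  show "integrable M (\<lambda>\<omega>. inner (Z \<omega>) (mat_cond_exp M F W \<omega>))"
    unfolding e2 using rc(1) by (intro Bochner_Integration.integrable_sum) auto
  show "(\<integral>\<omega>. inner (Z \<omega>) (mat_cond_exp M F W \<omega>) \<partial>M) = (\<integral>\<omega>. inner (Z \<omega>) (W \<omega>) \<partial>M)"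
    unfolding e1 e2
    using rc ci by (simp add: Bochner_Integration.integral_sum Bochner_Integration.integrable_sum)
qed

lemma quad_ineq:
  fixes x y c :: real
  assumes "0 \<le> c" "c \<le> 1/32" "0 \<le> x" "0 \<le> y"
  shows "- (x\<^sup>2 - x * y) + c / 2 * (x\<^sup>2 + 2 * x * y) \<le> - x\<^sup>2 / 4 + y\<^sup>2 / 2"
proof -
  have "0 \<le> ((1 + c) * x - y)\<^sup>2" by simp
  then have h: "0 \<le> (1 + c)\<^sup>2 * x\<^sup>2 - 2 * (1 + c) * x * y + y\<^sup>2"
    by (simp add: power2_eq_square algebra_simps)
  have "c * c \<le> c * (1/32)" using assms(1,2) by (rule mult_left_mono[rotated])
  then have "(1 + c)\<^sup>2 \<le> 3/2 - c" using assms(1,2) by (simp add: power2_eq_square algebra_simps)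
  then have "(1 + c)\<^sup>2 * x\<^sup>2 \<le> (3/2 - c) * x\<^sup>2" by (simp add: mult_right_mono)
  with h show ?thesis by (simp add: power2_eq_square algebra_simps)
qed

lemma pointwise_Q:
  fixes H Ch CH :: "real^'n^'m"
  assumes c: "0 \<le> c" "c \<le> 1/32" and eta: "\<eta> > 0" and CH: "norm CH \<le> norm H"
  shows "- \<eta> * inner H Ch + \<eta> * c / 2 * (- (norm CH)\<^sup>2 + 2 * inner CH Ch)
     \<le> - \<eta> / 4 * (norm H)\<^sup>2 + \<eta> / 2 * (norm (H - Ch))\<^sup>2"
proof -
  let ?x = "norm H" and ?y = "norm (H - Ch)"
  have i1: "inner H Ch \<ge> ?x\<^sup>2 - ?x * ?y"
  proof -
    have "inner H (H - Ch) \<le> ?x * ?y" by (rule norm_cauchy_schwarz)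
    moreover have "inner H Ch = ?x\<^sup>2 - inner H (H - Ch)"
      by (simp add: inner_diff_right power2_norm_eq_inner)
    ultimately show ?thesis by linarith
  qed
  have i2: "- (norm CH)\<^sup>2 + 2 * inner CH Ch \<le> ?x\<^sup>2 + 2 * ?x * ?y"
  proof -
    have "0 \<le> (norm (H - CH))\<^sup>2" by simp
    then have a: "- (norm CH)\<^sup>2 + 2 * inner CH H \<le> ?x\<^sup>2"
      unfolding power2_norm_eq_inner by (simp add: inner_diff_left inner_diff_right inner_commute)
    have "- inner CH (H - Ch) \<le> norm CH * ?y"
      using norm_cauchy_schwarz[of CH "Ch - H"] by (simp add: inner_diff_right norm_minus_commute)
    also have "\<dots> \<le> ?x * ?y" using CH by (simp add: mult_right_mono)
    finally have b: "- inner CH (H - Ch) \<le> ?x * ?y" .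
    have "inner CH Ch = inner CH H - inner CH (H - Ch)" by (simp add: inner_diff_right)
    then show ?thesis using a b by linarith
  qed
  have "- \<eta> * inner H Ch + \<eta> * c / 2 * (- (norm CH)\<^sup>2 + 2 * inner CH Ch)
     \<le> - \<eta> * (?x\<^sup>2 - ?x * ?y) + \<eta> * c / 2 * (?x\<^sup>2 + 2 * ?x * ?y)"
  proof -
    have "\<eta> * (?x\<^sup>2 - ?x * ?y) \<le> \<eta> * inner H Ch" using i1 eta by (intro mult_left_mono) auto
    moreover have "\<eta> * c / 2 * (- (norm CH)\<^sup>2 + 2 * inner CH Ch) \<le> \<eta> * c / 2 * (?x\<^sup>2 + 2 * ?x * ?y)"
      using i2 eta c by (intro mult_left_mono) auto
    ultimately show ?thesis by linarith
  qed
  also have "\<dots> = \<eta> * (- (?x\<^sup>2 - ?x * ?y) + c / 2 * (?x\<^sup>2 + 2 * ?x * ?y))" by (simp add: algebra_simps)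
  also have "\<dots> \<le> \<eta> * (- ?x\<^sup>2 / 4 + ?y\<^sup>2 / 2)"
    using quad_ineq[OF c norm_ge_zero norm_ge_zero, of H "H - Ch"] eta by (intro mult_left_mono) auto
  finally show ?thesis by (simp add: algebra_simps)
qed

theorem theorem1:
  fixes f :: "real^'n^'m \<Rightarrow> real"
    and gradf :: "real^'n^'m \<Rightarrow> real^'n^'m"
    and L \<tau> \<alpha> \<sigma> :: real
    and K :: nat
    and X0 :: "real^'n^'m"
    and M :: "'a measure"
    and X G :: "nat \<Rightarrow> 'a \<Rightarrow> real^'n^'m"
  assumes grad: "\<And>Y. (f has_derivative (\<lambda>H. gradf Y \<bullet> H)) (at Y)"
    and Lpos: "L > 0"
    and smooth: "\<And>A B. f A \<le> f B + gradf B \<bullet> (A - B) + L / 2 * (norm (A - B))\<^sup>2"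
    and bdd: "bdd_below (range f)"
    and tau: "\<tau> > 0"
    and K: "K \<ge> 1"
    and alpha: "1 < \<alpha>" "\<alpha> \<le> 2"
    and sigma: "\<sigma> > 0"
    and P: "prob_space M"
    and X0: "\<And>\<omega>. \<omega> \<in> space M \<Longrightarrow> X 0 \<omega> = X0"
    and Xstep: "\<And>k \<omega>. \<omega> \<in> space M \<Longrightarrow>
        X (Suc k) \<omega> = X k \<omega> - (1 / (4 * L * sqrt K)) *\<^sub>R spec_clip \<tau> (G k \<omega>)"
    and Xmeas: "\<And>k. X k \<in> borel_measurable M"
    and Gmeas: "\<And>k. G k \<in> borel_measurable M"
    and Gint: "\<And>k. integrable M (G k)"
    and unbiased: "\<And>k i j. AE \<omega> in M.
        real_cond_exp M (gen_alg M (X k)) (\<lambda>\<omega>'. G k \<omega>' $ i $ j) \<omega> = gradf (X k \<omega>) $ i $ j"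
    and moment: "\<And>k. AE \<omega> in M.
        nn_cond_exp M (gen_alg M (X k)) (\<lambda>\<omega>'. ennreal (norm (G k \<omega>' - gradf (X k \<omega>')) powr \<alpha>)) \<omega>
          \<le> ennreal (\<sigma> powr \<alpha>)"
  shows "(MIN k\<in>{..<K}. integral\<^sup>L M (\<lambda>\<omega>. (norm (gradf (X k \<omega>)))\<^sup>2))
     \<le> 16 * L * (f X0 - (INF Y. f Y)) / sqrt K
       + (2 powr (4 - \<alpha>) * real (min CARD('m) CARD('n)) powr (1 - \<alpha> / 2))
           * \<tau> powr (2 - \<alpha>) * \<sigma> powr \<alpha> / (8 * sqrt K)
       + 2 / K * (\<Sum>k<K. integral\<^sup>L M (\<lambda>\<omega>.
           (norm (gradf (X k \<omega>) - mat_cond_exp M (gen_alg M (X k)) (\<lambda>\<omega>'. spec_clip \<tau> (G k \<omega>')) \<omega>))\<^sup>2))"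
proof -
  interpret prob_space M by (rule P)
  have fmM: "finite_measure M" using P unfolding prob_space_def by simp
  define d where "d = real (min CARD('m) CARD('n))"
  define \<eta> where "\<eta> = 1 / (4 * L * sqrt K)"
  define c where "c = 1 / (4 * sqrt K)"
  define finf where "finf = (INF Y. f Y)"
  define \<beta> where "\<beta> = 2 powr (2 - \<alpha>) * \<tau> powr (2 - \<alpha>) * d powr (1 - \<alpha>/2)"
  define F where "F k = gen_alg M (X k)" for k
  define g where "g k = (\<integral>\<omega>. (norm (gradf (X k \<omega>)))\<^sup>2 \<partial>M)" for k
  define Dl where "Dl k = (\<integral>\<omega>. (norm (gradf (X k \<omega>) - mat_cond_exp M (F k) (\<lambda>\<omega>'. spec_clip \<tau> (G k \<omega>')) \<omega>))\<^sup>2 \<partial>M)" for k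
  define a where "a k = (\<integral>\<omega>. f (X k \<omega>) \<partial>M)" for k
  have tau0: "\<tau> \<ge> 0" using tau by simp
  have sK: "sqrt (real K) \<ge> 1" using K by simp
  have etapos: "\<eta> > 0" using Lpos sK by (simp add: \<eta>_def)
  have Leta: "L * \<eta> = c" using Lpos by (simp add: \<eta>_def c_def)
  have cpos: "c > 0" using sK by (simp add: c_def)
  have finf_le: "\<And>Y. finf \<le> f Y" unfolding finf_def using bdd by (simp add: cINF_lower)
  have gb: "\<And>Y. (norm (gradf Y))\<^sup>2 \<le> 2 * L * (f Y - finf)"
    unfolding finf_def by (rule grad_bound[OF Lpos smooth bdd])
  have Dnn: "\<And>k. 0 \<le> Dl k" unfolding Dl_def by (intro integral_nonneg_AE) auto
  have g0: "g 0 = (norm (gradf X0))\<^sup>2"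
  proof -
    have "g 0 = (\<integral>\<omega>. (norm (gradf X0))\<^sup>2 \<partial>M)" unfolding g_def by (intro Bochner_Integration.integral_cong) (auto simp: X0)
    then show ?thesis by (simp add: prob_space)
  qed
  have fin: "finite {..<K}" "{..<K} \<noteq> {}" using K by (auto simp: lessThan_empty_iff)
  have minle: "\<And>k. k < K \<Longrightarrow> (MIN k\<in>{..<K}. g k) \<le> g k" using fin by auto
  have R2nn: "0 \<le> (2 powr (4 - \<alpha>) * d powr (1 - \<alpha> / 2)) * \<tau> powr (2 - \<alpha>) * \<sigma> powr \<alpha> / (8 * sqrt K)"
    by simp
  have R3nn: "0 \<le> 2 / real K * (\<Sum>k<K. Dl k)" using Dnn by (simp add: sum_nonneg)
  have f0: "0 \<le> f X0 - finf" using finf_le[of X0] by simp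
  have main: "(MIN k\<in>{..<K}. g k) \<le> 16 * L * (f X0 - finf) / sqrt K
       + (2 powr (4 - \<alpha>) * d powr (1 - \<alpha> / 2)) * \<tau> powr (2 - \<alpha>) * \<sigma> powr \<alpha> / (8 * sqrt K)
       + 2 / real K * (\<Sum>k<K. Dl k)"
  proof (cases "K \<le> 64")
    case True
    have s8: "sqrt (real K) \<le> 8"
    proof -
      have "sqrt (real K) \<le> sqrt (8\<^sup>2)" using True by (intro real_sqrt_le_mono) simp
      then show ?thesis by simp
    qed
    have "(MIN k\<in>{..<K}. g k) \<le> g 0" using minle[of 0] K by simp
    also have "\<dots> \<le> 2 * L * (f X0 - finf)" using g0 gb[of X0] by simp
    also have "\<dots> = 16 * L * (f X0 - finf) / 8" by simp
    also have "\<dots> \<le> 16 * L * (f X0 - finf) / sqrt K"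
      using f0 Lpos s8 sK by (intro divide_left_mono) auto
    finally show ?thesis using R2nn R3nn unfolding d_def by linarith
  next
    case False
    have c32: "c \<le> 1/32"
    proof -
      have "sqrt (8\<^sup>2) \<le> sqrt (real K)" using False by (intro real_sqrt_le_mono) simp
      then have "8 \<le> sqrt (real K)" by simp
      then show ?thesis unfolding c_def using K by (intro divide_left_mono) auto
    qed
    have gm[measurable]: "gradf \<in> borel_measurable borel" by (rule gradf_meas[OF grad])
    have fc: "continuous_on UNIV f"
      using grad has_derivative_continuous continuous_at_imp_continuous_on by blast
    have fm[measurable]: "f \<in> borel_measurable borel" by (rule borel_measurable_continuous_onI[OF fc])
    have cm[measurable]: "spec_clip \<tau> \<in> borel_measurable (borel :: (real^'n^'m) measure)"
      by (rule clip_meas[OF tau0])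
    have Cb: "\<And>A. norm (spec_clip \<tau> (A::real^'n^'m)) \<le> sqrt d * \<tau>"
      unfolding d_def by (rule clip_norm_le[OF tau0])
    have Xbd: "\<forall>\<omega>\<in>space M. norm (X k \<omega> - X0) \<le> real k * (\<eta> * (sqrt d * \<tau>))" for k
    proof (induction k)
      case 0
      then show ?case by (simp add: X0)
    next
      case (Suc k)
      show ?case
      proof
        fix \<omega> assume w: "\<omega> \<in> space M"
        have eq: "X (Suc k) \<omega> - X0 = (X k \<omega> - X0) - \<eta> *\<^sub>R spec_clip \<tau> (G k \<omega>)"
          using Xstep[OF w] by (simp add: \<eta>_def)
        have "norm (X (Suc k) \<omega> - X0) \<le> norm (X k \<omega> - X0) + norm (\<eta> *\<^sub>R spec_clip \<tau> (G k \<omega>))"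
          unfolding eq by (rule norm_triangle_ineq4)
        also have "\<dots> \<le> real k * (\<eta> * (sqrt d * \<tau>)) + \<eta> * (sqrt d * \<tau>)"
          using Suc.IH w Cb[of "G k \<omega>"] etapos by (intro add_mono) (auto intro: mult_left_mono)
        finally show "norm (X (Suc k) \<omega> - X0) \<le> real (Suc k) * (\<eta> * (sqrt d * \<tau>))"
          by (simp add: algebra_simps)
      qed
    qed
    have bnd: "\<exists>B. \<forall>\<omega>\<in>space M. \<bar>f (X k \<omega>)\<bar> \<le> B \<and> norm (gradf (X k \<omega>)) \<le> B" for k
    proof -
      define r where "r = real k * (\<eta> * (sqrt d * \<tau>))"
      have "compact (f ` cball X0 r)"
        by (intro compact_continuous_image continuous_on_subset[OF fc]) auto
      then have "bounded (f ` cball X0 r)" by (rule compact_imp_bounded)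
      then obtain B0 where B0: "\<And>y. y \<in> f ` cball X0 r \<Longrightarrow> norm y \<le> B0"
        unfolding bounded_iff by blast
      have inb: "\<And>\<omega>. \<omega> \<in> space M \<Longrightarrow> X k \<omega> \<in> cball X0 r"
        using Xbd[of k] by (auto simp: r_def dist_norm norm_minus_commute)
      have fb: "\<And>\<omega>. \<omega> \<in> space M \<Longrightarrow> \<bar>f (X k \<omega>)\<bar> \<le> B0"
        using B0 inb by fastforce
      have gbd: "norm (gradf (X k \<omega>)) \<le> sqrt (2 * L * (B0 - finf))" if w: "\<omega> \<in> space M" for \<omega>
      proof -
        have "f (X k \<omega>) \<le> B0" using fb[OF w] by simp
        then have "2 * L * (f (X k \<omega>) - finf) \<le> 2 * L * (B0 - finf)" using Lpos by (intro mult_left_mono) auto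
        then have "(norm (gradf (X k \<omega>)))\<^sup>2 \<le> 2 * L * (B0 - finf)" using gb[of "X k \<omega>"] by linarith
        then show ?thesis by (rule real_le_rsqrt)
      qed
      show ?thesis
        by (rule exI[of _ "max B0 (sqrt (2 * L * (B0 - finf)))"]) (use fb gbd in \<open>force\<close>)
    qed
    have XF: "X k \<in> measurable (F k) borel" for k
      unfolding F_def gen_alg_def by (rule measurable_vimage_algebra1) simp
    have subalg: "subalgebra M (F k)" for k
      unfolding subalgebra_def F_def gen_alg_def using sets_image_in_sets[OF refl Xmeas[of k]] by simp
    have sfs: "sigma_finite_subalgebra M (F k)" for k
      using finite_measure_subalgebra_is_sigma_finite[of M "F k"] subalg[of k] fmM
      unfolding finite_measure_subalgebra_def finite_measure_subalgebra_axioms_def by blast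
    have intb: "integrable M h" if "h \<in> borel_measurable M" "\<And>\<omega>. \<omega> \<in> space M \<Longrightarrow> \<bar>h \<omega>\<bar> \<le> bb"
      for h :: "'a \<Rightarrow> real" and bb
      using that by (intro integrable_const_bound[where B=bb]) (auto intro!: AE_I2)
    have fXm[measurable]: "(\<lambda>\<omega>. f (X j \<omega>)) \<in> borel_measurable M" for j
      by (rule measurable_compose[OF Xmeas fm])
    have ifX: "integrable M (\<lambda>\<omega>. f (X j \<omega>))" for j
    proof -
      obtain BB where "\<forall>\<omega>\<in>space M. \<bar>f (X j \<omega>)\<bar> \<le> BB \<and> norm (gradf (X j \<omega>)) \<le> BB" using bnd by blast
      then show ?thesis by (intro intb[of _ BB]) auto
    qed
    have step: "a (Suc k) \<le> a k - \<eta>/4 * g k + \<eta>/2 * Dl k + \<eta> * c / 2 * (\<beta> * \<sigma> powr \<alpha>)" for k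
    proof -
      obtain B where B: "\<forall>\<omega>\<in>space M. \<bar>f (X k \<omega>)\<bar> \<le> B \<and> norm (gradf (X k \<omega>)) \<le> B"
        using bnd by blast
      define H where "H \<omega> = gradf (X k \<omega>)" for \<omega>
      define Cw where "Cw \<omega> = spec_clip \<tau> (G k \<omega>)" for \<omega>
      define CH where "CH \<omega> = spec_clip \<tau> (H \<omega>)" for \<omega>
      define Ch where "Ch \<omega> = mat_cond_exp M (F k) Cw \<omega>" for \<omega>
      define b where "b = sqrt d * \<tau>"
      have bnn: "0 \<le> b" unfolding b_def d_def using tau0 by simp
      have Hb: "\<And>\<omega>. \<omega> \<in> space M \<Longrightarrow> norm (H \<omega>) \<le> B" using B by (simp add: H_def)
      have Cwb: "\<And>\<omega>. norm (Cw \<omega>) \<le> b" unfolding Cw_def b_def by (rule Cb)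
      have CHH: "\<And>\<omega>. norm (CH \<omega>) \<le> norm (H \<omega>)" unfolding CH_def by (rule clip_props(2)[OF tau0])
      have CHb: "\<And>\<omega>. \<omega> \<in> space M \<Longrightarrow> norm (CH \<omega>) \<le> B" using CHH Hb order_trans by blast
      have HmF: "H \<in> borel_measurable (F k)" unfolding H_def by (rule measurable_compose[OF XF gm])
      have Hm[measurable]: "H \<in> borel_measurable M" unfolding H_def by (rule measurable_compose[OF Xmeas gm])
      have CHmF: "CH \<in> borel_measurable (F k)" unfolding CH_def by (rule measurable_compose[OF HmF cm])
      have CHm[measurable]: "CH \<in> borel_measurable M" unfolding CH_def by (rule measurable_compose[OF Hm cm])
      have Cwm[measurable]: "Cw \<in> borel_measurable M" unfolding Cw_def by (rule measurable_compose[OF Gmeas cm])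
      note ci1 = cond_inner[OF sfs fmM HmF Hb Cwm Cwb]
      note ci2 = cond_inner[OF sfs fmM CHmF CHb Cwm Cwb]
      have iCH2: "integrable M (\<lambda>\<omega>. (norm (CH \<omega>))\<^sup>2)"
        by (rule intb[of _ "B\<^sup>2"]) (auto intro!: power_mono CHb)
      have iH2: "integrable M (\<lambda>\<omega>. (norm (H \<omega>))\<^sup>2)"
        by (rule intb[of _ "B\<^sup>2"]) (auto intro!: power_mono Hb)
      have iD: "integrable M (\<lambda>\<omega>. (norm (Cw \<omega> - CH \<omega>))\<^sup>2)"
      proof (rule intb[of _ "(b + B)\<^sup>2"])
        fix \<omega> assume w: "\<omega> \<in> space M"
        have "norm (Cw \<omega> - CH \<omega>) \<le> b + B"
          using norm_triangle_ineq4[of "Cw \<omega>" "CH \<omega>"] Cwb[of \<omega>] CHb[OF w] by linarith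
        then show "\<bar>(norm (Cw \<omega> - CH \<omega>))\<^sup>2\<bar> \<le> (b + B)\<^sup>2" by (simp add: power_mono)
      qed simp
      have idelta: "integrable M (\<lambda>\<omega>. (norm (H \<omega> - Ch \<omega>))\<^sup>2)"
      proof -
        have e: "(\<lambda>\<omega>. (norm (H \<omega> - Ch \<omega>))\<^sup>2) = (\<lambda>\<omega>. \<Sum>i\<in>UNIV. \<Sum>j\<in>UNIV.
             (H \<omega> $ i $ j - real_cond_exp M (F k) (\<lambda>\<omega>'. Cw \<omega>' $ i $ j) \<omega>)\<^sup>2)"
          by (simp add: norm_sq_entries Ch_def mat_cond_exp_def)
        have "integrable M (\<lambda>\<omega>. (H \<omega> $ i $ j - real_cond_exp M (F k) (\<lambda>\<omega>'. Cw \<omega>' $ i $ j) \<omega>)\<^sup>2)" for i j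
        proof -
          have Cij: "\<bar>Cw \<omega> $ i $ j\<bar> \<le> b" for \<omega> using entry_le_norm[of "Cw \<omega>" i j] Cwb[of \<omega>] by linarith
          have Cl: "- b \<le> Cw \<omega> $ i $ j" "Cw \<omega> $ i $ j \<le> b" for \<omega>
            using Cij[of \<omega>] abs_le_iff[of "Cw \<omega> $ i $ j" b] by linarith+
          have iC: "integrable M (\<lambda>\<omega>. Cw \<omega> $ i $ j)"
            by (rule intb[of _ b]) (auto simp: Cij)
          have up: "AE \<omega> in M. real_cond_exp M (F k) (\<lambda>\<omega>'. Cw \<omega>' $ i $ j) \<omega> \<le> b"
            by (rule sigma_finite_subalgebra.real_cond_exp_le_c[OF sfs iC]) (use Cl in \<open>auto intro!: AE_I2\<close>)
          have lo: "AE \<omega> in M. real_cond_exp M (F k) (\<lambda>\<omega>'. Cw \<omega>' $ i $ j) \<omega> \<ge> -b"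
            by (rule sigma_finite_subalgebra.real_cond_exp_ge_c[OF sfs iC]) (use Cl in \<open>auto intro!: AE_I2\<close>)
          show ?thesis
          proof (rule integrable_const_bound[where B="(B + b)\<^sup>2"])
            show "AE \<omega> in M. norm ((H \<omega> $ i $ j - real_cond_exp M (F k) (\<lambda>\<omega>'. Cw \<omega>' $ i $ j) \<omega>)\<^sup>2) \<le> (B + b)\<^sup>2"
              using up lo AE_space
            proof eventually_elim
              case (elim \<omega>)
              have "\<bar>H \<omega> $ i $ j\<bar> \<le> B" using entry_le_norm[of "H \<omega>" i j] Hb[OF elim(3)] by linarith
              then have "\<bar>H \<omega> $ i $ j - real_cond_exp M (F k) (\<lambda>\<omega>'. Cw \<omega>' $ i $ j) \<omega>\<bar> \<le> B + b"
                using elim(1,2) by (simp add: abs_le_iff)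
              then have "\<bar>H \<omega> $ i $ j - real_cond_exp M (F k) (\<lambda>\<omega>'. Cw \<omega>' $ i $ j) \<omega>\<bar>\<^sup>2 \<le> (B + b)\<^sup>2"
                by (rule power_mono) simp
              then show ?case by simp
            qed
            show "(\<lambda>\<omega>. (H \<omega> $ i $ j - real_cond_exp M (F k) (\<lambda>\<omega>'. Cw \<omega>' $ i $ j) \<omega>)\<^sup>2) \<in> borel_measurable M"
              by measurable
          qed
        qed
        then show ?thesis unfolding e by (intro Bochner_Integration.integrable_sum) auto
      qed
      have P: "f (X (Suc k) \<omega>) \<le> f (X k \<omega>) - \<eta> * inner (H \<omega>) (Cw \<omega>)
          + \<eta> * c / 2 * (- (norm (CH \<omega>))\<^sup>2 + 2 * inner (CH \<omega>) (Cw \<omega>) + (norm (Cw \<omega> - CH \<omega>))\<^sup>2)"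
        if w: "\<omega> \<in> space M" for \<omega>
      proof -
        have xs: "X (Suc k) \<omega> - X k \<omega> = - (\<eta> *\<^sub>R Cw \<omega>)" using Xstep[OF w] by (simp add: \<eta>_def Cw_def)
        have "f (X (Suc k) \<omega>) \<le> f (X k \<omega>) + gradf (X k \<omega>) \<bullet> (X (Suc k) \<omega> - X k \<omega>)
            + L / 2 * (norm (X (Suc k) \<omega> - X k \<omega>))\<^sup>2"
          by (rule smooth)
        also have "\<dots> = f (X k \<omega>) - \<eta> * inner (H \<omega>) (Cw \<omega>) + \<eta> * c / 2 * (norm (Cw \<omega>))\<^sup>2"
          unfolding xs Leta[symmetric] using etapos by (simp add: H_def power_mult_distrib power2_eq_square)
        also have "(norm (Cw \<omega>))\<^sup>2 = - (norm (CH \<omega>))\<^sup>2 + 2 * inner (CH \<omega>) (Cw \<omega>) + (norm (Cw \<omega> - CH \<omega>))\<^sup>2"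
          unfolding power2_norm_eq_inner by (simp add: inner_diff_left inner_diff_right inner_commute)
        finally show ?thesis .
      qed
      have I1: "a (Suc k) \<le> a k - \<eta> * (\<integral>\<omega>. inner (H \<omega>) (Cw \<omega>) \<partial>M)
          + \<eta> * c / 2 * (- (\<integral>\<omega>. (norm (CH \<omega>))\<^sup>2 \<partial>M) + 2 * (\<integral>\<omega>. inner (CH \<omega>) (Cw \<omega>) \<partial>M))
          + \<eta> * c / 2 * (\<integral>\<omega>. (norm (Cw \<omega> - CH \<omega>))\<^sup>2 \<partial>M)"
      proof -
        have "a (Suc k) \<le> (\<integral>\<omega>. f (X k \<omega>) - \<eta> * inner (H \<omega>) (Cw \<omega>)
          + \<eta> * c / 2 * (- (norm (CH \<omega>))\<^sup>2 + 2 * inner (CH \<omega>) (Cw \<omega>) + (norm (Cw \<omega> - CH \<omega>))\<^sup>2) \<partial>M)"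
          unfolding a_def using ifX ci1(1) ci2(1) iCH2 iD P by (intro integral_mono) auto
        also have "\<dots> = a k - \<eta> * (\<integral>\<omega>. inner (H \<omega>) (Cw \<omega>) \<partial>M)
          + \<eta> * c / 2 * (- (\<integral>\<omega>. (norm (CH \<omega>))\<^sup>2 \<partial>M) + 2 * (\<integral>\<omega>. inner (CH \<omega>) (Cw \<omega>) \<partial>M))
          + \<eta> * c / 2 * (\<integral>\<omega>. (norm (Cw \<omega> - CH \<omega>))\<^sup>2 \<partial>M)"
          using ifX ci1(1) ci2(1) iCH2 iD by (simp add: a_def algebra_simps)
        finally show ?thesis .
      qed
      have I2: "- \<eta> * (\<integral>\<omega>. inner (H \<omega>) (Cw \<omega>) \<partial>M)
          + \<eta> * c / 2 * (- (\<integral>\<omega>. (norm (CH \<omega>))\<^sup>2 \<partial>M) + 2 * (\<integral>\<omega>. inner (CH \<omega>) (Cw \<omega>) \<partial>M))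
          \<le> - \<eta> / 4 * g k + \<eta> / 2 * Dl k"
      proof -
        have "- \<eta> * (\<integral>\<omega>. inner (H \<omega>) (Cw \<omega>) \<partial>M)
          + \<eta> * c / 2 * (- (\<integral>\<omega>. (norm (CH \<omega>))\<^sup>2 \<partial>M) + 2 * (\<integral>\<omega>. inner (CH \<omega>) (Cw \<omega>) \<partial>M))
          = (\<integral>\<omega>. - \<eta> * inner (H \<omega>) (Ch \<omega>) + \<eta> * c / 2 * (- (norm (CH \<omega>))\<^sup>2 + 2 * inner (CH \<omega>) (Ch \<omega>)) \<partial>M)"
          using ci1 ci2 iCH2 unfolding Ch_def by (simp add: algebra_simps)
        also have "\<dots> \<le> (\<integral>\<omega>. - \<eta> / 4 * (norm (H \<omega>))\<^sup>2 + \<eta> / 2 * (norm (H \<omega> - Ch \<omega>))\<^sup>2 \<partial>M)"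
          using ci1(2) ci2(2) iCH2 iH2 idelta unfolding Ch_def[symmetric]
          by (intro integral_mono pointwise_Q[OF less_imp_le[OF cpos] c32 etapos CHH]) auto
        also have "\<dots> = - \<eta> / 4 * g k + \<eta> / 2 * Dl k"
          using iH2 idelta unfolding g_def Dl_def H_def Ch_def Cw_def[abs_def] by simp
        finally show ?thesis .
      qed
      have Dterm: "(\<integral>\<omega>. (norm (Cw \<omega> - CH \<omega>))\<^sup>2 \<partial>M) \<le> \<beta> * \<sigma> powr \<alpha>"
      proof -
        define E where "E \<omega> = norm (G k \<omega> - gradf (X k \<omega>)) powr \<alpha>" for \<omega>
        have bnn': "0 \<le> \<beta>" by (simp add: \<beta>_def)
        have pw: "(norm (Cw \<omega> - CH \<omega>))\<^sup>2 \<le> \<beta> * E \<omega>" for \<omega>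
          unfolding Cw_def CH_def H_def \<beta>_def d_def E_def by (rule clip_diff_bound[OF tau alpha])
        have Em: "(\<lambda>\<omega>. ennreal (E \<omega>)) \<in> borel_measurable M"
          unfolding E_def using Gmeas[of k] Xmeas[of k] by measurable
        have "(\<integral>\<^sup>+\<omega>. ennreal (E \<omega>) \<partial>M) = (\<integral>\<^sup>+\<omega>. nn_cond_exp M (F k) (\<lambda>\<omega>. ennreal (E \<omega>)) \<omega> \<partial>M)"
          using sigma_finite_subalgebra.nn_cond_exp_intg[OF sfs[of k], of "\<lambda>_. 1" "\<lambda>\<omega>. ennreal (E \<omega>)"] Em by simp
        also have "\<dots> \<le> (\<integral>\<^sup>+\<omega>. ennreal (\<sigma> powr \<alpha>) \<partial>M)"
          using moment[of k] unfolding F_def E_def by (intro nn_integral_mono_AE) auto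
        also have "\<dots> = ennreal (\<sigma> powr \<alpha>)" by (simp add: emeasure_space_1)
        finally have nE: "(\<integral>\<^sup>+\<omega>. ennreal (E \<omega>) \<partial>M) \<le> ennreal (\<sigma> powr \<alpha>)" .
        have "ennreal (\<integral>\<omega>. (norm (Cw \<omega> - CH \<omega>))\<^sup>2 \<partial>M) = (\<integral>\<^sup>+\<omega>. ennreal ((norm (Cw \<omega> - CH \<omega>))\<^sup>2) \<partial>M)"
          by (rule nn_integral_eq_integral[symmetric]) (auto simp: iD)
        also have "\<dots> \<le> (\<integral>\<^sup>+\<omega>. ennreal \<beta> * ennreal (E \<omega>) \<partial>M)"
        proof (intro nn_integral_mono)
          fix \<omega>
          have "ennreal ((norm (Cw \<omega> - CH \<omega>))\<^sup>2) \<le> ennreal (\<beta> * E \<omega>)" using pw by (intro ennreal_leI)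
          also have "\<dots> = ennreal \<beta> * ennreal (E \<omega>)" by (rule ennreal_mult) (auto simp: bnn' E_def)
          finally show "ennreal ((norm (Cw \<omega> - CH \<omega>))\<^sup>2) \<le> ennreal \<beta> * ennreal (E \<omega>)" .
        qed
        also have "\<dots> = ennreal \<beta> * (\<integral>\<^sup>+\<omega>. ennreal (E \<omega>) \<partial>M)" by (rule nn_integral_cmult) (rule Em)
        also have "\<dots> \<le> ennreal \<beta> * ennreal (\<sigma> powr \<alpha>)" by (intro mult_left_mono nE) simp
        also have "\<dots> = ennreal (\<beta> * \<sigma> powr \<alpha>)" by (rule ennreal_mult[symmetric]) (auto simp: bnn')
        finally show ?thesis using bnn' by (subst (asm) ennreal_le_iff) auto
      qed
      have "\<eta> * c / 2 * (\<integral>\<omega>. (norm (Cw \<omega> - CH \<omega>))\<^sup>2 \<partial>M) \<le> \<eta> * c / 2 * (\<beta> * \<sigma> powr \<alpha>)"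
        using etapos cpos by (intro mult_left_mono[OF Dterm]) simp
      then show ?thesis using I1 I2 by linarith
    qed
    have a0: "a 0 = f X0"
    proof -
      have "a 0 = (\<integral>\<omega>. f X0 \<partial>M)" unfolding a_def by (intro Bochner_Integration.integral_cong) (auto simp: X0)
      then show ?thesis by (simp add: prob_space)
    qed
    have aK: "finf \<le> a K"
    proof -
      have "(\<integral>\<omega>. finf \<partial>M) \<le> a K" unfolding a_def by (intro integral_mono ifX) (auto simp: finf_le)
      then show ?thesis by (simp add: prob_space)
    qed
    define Z where "Z = \<eta> * c / 2 * (\<beta> * \<sigma> powr \<alpha>)"
    have tele: "a n \<le> a 0 - (\<Sum>k<n. \<eta>/4 * g k) + (\<Sum>k<n. \<eta>/2 * Dl k) + real n * Z" for n
    proof (induction n)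
      case 0
      show ?case by simp
    next
      case (Suc n)
      have st: "a (Suc n) \<le> a n - \<eta>/4 * g n + \<eta>/2 * Dl n + Z" using step[of n] unfolding Z_def .
      have "real (Suc n) * Z = real n * Z + Z" by (simp add: algebra_simps)
      then show ?case using Suc.IH st by (simp add: sum.lessThan_Suc)
    qed
    define SD where "SD = (\<Sum>k<K. Dl k)"
    define X1 where "X1 = \<beta> * \<sigma> powr \<alpha>"
    have S1: "\<eta>/4 * (\<Sum>k<K. g k) \<le> (f X0 - finf) + \<eta>/2 * SD + real K * (\<eta> * c / 2 * X1)"
      using tele[of K] a0 aK unfolding Z_def by (simp add: SD_def X1_def sum_distrib_left)
    have S2: "(\<Sum>k<K. g k) \<le> 4/\<eta> * (f X0 - finf) + 2 * SD + real K * (2 * c * X1)"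
    proof -
      have "(\<Sum>k<K. g k) = 4/\<eta> * (\<eta>/4 * (\<Sum>k<K. g k))" using etapos by simp
      also have "\<dots> \<le> 4/\<eta> * ((f X0 - finf) + \<eta>/2 * SD + real K * (\<eta> * c / 2 * X1))"
        using S1 etapos by (intro mult_left_mono) auto
      also have "\<dots> = 4/\<eta> * (f X0 - finf) + 2 * SD + real K * (2 * c * X1)"
        using etapos by (simp add: field_simps)
      finally show ?thesis .
    qed
    have S3: "real K * (MIN k\<in>{..<K}. g k) \<le> (\<Sum>k<K. g k)"
    proof -
      have "(\<Sum>k<K. (MIN k\<in>{..<K}. g k)) \<le> (\<Sum>k<K. g k)" using minle by (intro sum_mono) auto
      then show ?thesis by simp
    qed
    have Kpos: "real K > 0" using K by simp
    have "(MIN k\<in>{..<K}. g k) \<le> (4/\<eta> * (f X0 - finf) + 2 * SD + real K * (2 * c * X1)) / real K"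
      using S2 S3 Kpos by (simp add: field_simps)
    also have "\<dots> = 16 * L * (f X0 - finf) / sqrt K
       + (2 powr (4 - \<alpha>) * d powr (1 - \<alpha> / 2)) * \<tau> powr (2 - \<alpha>) * \<sigma> powr \<alpha> / (8 * sqrt K)
       + 2 / real K * SD"
    proof -
      define s where "s = sqrt (real K)"
      have p4: "2 powr (4 - \<alpha>) = 4 * 2 powr (2 - \<alpha>)"
        using powr_add[of 2 2 "2 - \<alpha>"] by simp
      have Ks: "real K = s * s" unfolding s_def by simp
      have sp: "s > 0" unfolding s_def using Kpos by simp
      show ?thesis
        unfolding p4 X1_def \<beta>_def \<eta>_def c_def
        unfolding s_def[symmetric]
        unfolding Ks
        using sp Lpos by (simp add: field_simps)
    qed
    finally show ?thesis unfolding SD_def .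
  qed
  show ?thesis using main unfolding g_def Dl_def F_def finf_def d_def .
qed

end
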